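(* (1) For every $\mathbf{x}\in\mathcal{O}$, its code $(i_j)_{j\ge1}$ is the label of an infinite path in the automaton $\mathcal{M}$ starting at state $A$. (2) Conversely, let $(i_j)_{j\ge1}$ be the label of an infinite path in $\mathcal{M}$ starting at $A$. If $(i_j)$ is not eventually $0$, then there is exactly one infinite binary word $\mathbf{x}$ coded by $(i_j)$, and $\mathbf{x}\in\mathcal{O}$. If $(i_j)$ is eventually $0$, say $i_j=0$ for all $j\ge c$, then the infinite words coded by $(i_j)$ are exactly two, one with tail $\mathbf{t}$ (i.e. $\mathbf{y}_{c-1}=\mathbf{t}$) and one with tail $\overline{\mathbf{t}}$, and: if from step $c$ on the path cycles at state $A$ or between states $B$ and $D$, both of these words are in $\mathcal{O}$; if it cycles between $J$ and $K$, exactly the word with tail $\mathbf{t}$ is in $\mathcal{O}$; if it cycles between $G$ and $H$, exactly the word with tail $\overline{\mathbf{t}}$ is in $\mathcal{O}$.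
   Context: $\Sigma=\{0,1\}$. An overlap is a word $axaxa$ with $a\in\Sigma$, $x\in\Sigma^*$; a word is overlap-free if it has no overlap as a factor. $\mathcal{O}$ is the set of right-infinite binary overlap-free words, $\mu$ is the morphism $0\mapsto01$, $1\mapsto10$, $\mathbf{t}=\mu^\omega(0)$, $\overline{\mathbf{t}}=\mu^\omega(1)$. Let $p_0=\epsilon$, $p_1=0$, $p_2=00$, $p_3=1$, $p_4=11$. A sequence $(i_j)_{j\ge1}$ over $\{0,1,2,3,4\}$ codes an infinite binary word $\mathbf{x}$ if there are infinite binary words $\mathbf{y}_0=\mathbf{x},\mathbf{y}_1,\mathbf{y}_2,\dots$ with $\mathbf{y}_{j-1}=p_{i_j}\mu(\mathbf{y}_j)$ for all $j\ge1$. For $\mathbf{x}\in\mathcal{O}$, the code of $\mathbf{x}$ is the unique sequence $(i_j)$ coding $\mathbf{x}$ with all $\mathbf{y}_j\in\mathcal{O}$ (which exists and is unique by the Restivo–Salemi factorization: each $\mathbf{x}\in\mathcal{O}$ is uniquely $p\mu(\mathbf{y})$ with $p\in\{p_0,\dots,p_4\}$, $\mathbf{y}\in\mathcal{O}$). The automaton $\mathcal{M}$ has states $A,B,C,D,E,F,G,H,I,J,K$, input alphabet $\{0,1,2,3,4\}$, and exactly the following transitions: $A\xrightarrow{0}A$, $A\xrightarrow{1}B$, $A\xrightarrow{2}C$, $A\xrightarrow{3}D$, $A\xrightarrow{4}E$; $B\xrightarrow{0}D$, $B\xrightarrow{1}B$, $B\xrightarrow{3}E$; $D\xrightarrow{0}B$,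 $D\xrightarrow{1}C$, $D\xrightarrow{3}D$; $C\xrightarrow{0}F$, $C\xrightarrow{3}E$; $E\xrightarrow{0}I$, $E\xrightarrow{1}C$; $F\xrightarrow{3}G$; $I\xrightarrow{1}J$; $J\xrightarrow{0}K$, $J\xrightarrow{1}B$; $K\xrightarrow{0}J$, $K\xrightarrow{1}C$; $G\xrightarrow{0}H$, $G\xrightarrow{3}D$; $H\xrightarrow{0}G$, $H\xrightarrow{3}E$. *)

theory Defs
  imports Main
begin

text \<open>Binary alphabet: letter 0 is False, letter 1 is True.
  Infinite words are functions nat => bool, finite words are bool lists.\<close>

type_synonym iword = "nat \<Rightarrow> bool"

definition is_overlap :: "bool list \<Rightarrow> bool" where
  "is_overlap u \<longleftrightarrow> (\<exists>a x. u = a # x @ a # x @ [a])"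

definition occurs_at :: "bool list \<Rightarrow> iword \<Rightarrow> nat \<Rightarrow> bool" where
  "occurs_at u w i \<longleftrightarrow> (\<forall>k<length u. w (i + k) = u ! k)"

definition overlap_free :: "iword \<Rightarrow> bool" where
  "overlap_free w \<longleftrightarrow> \<not> (\<exists>u i. is_overlap u \<and> occurs_at u w i)"

definition OF :: "iword set" where
  "OF = {w. overlap_free w}"

definition mu_list :: "bool list \<Rightarrow> bool list" where
  "mu_list w = concat (map (\<lambda>a. [a, \<not> a]) w)"

definition mu :: "iword \<Rightarrow> iword" where
  "mu y n = (if even n then y (n div 2) else \<not> y (n div 2))"

text \<open>mu^omega(a): the n-th letter is the n-th letter of mu^(n+1)(a), which has length 2^(n+1).\<close>

definition mu_omega :: "bool \<Rightarrow> iword" where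
  "mu_omega a n = ((mu_list ^^ Suc n) [a]) ! n"

definition thue :: iword where "thue = mu_omega False"
definition thue_bar :: iword where "thue_bar = mu_omega True"

definition conc :: "bool list \<Rightarrow> iword \<Rightarrow> iword" where
  "conc p y n = (if n < length p then p ! n else y (n - length p))"

fun pref :: "nat \<Rightarrow> bool list" where
  "pref 0 = []"
| "pref (Suc 0) = [False]"
| "pref (Suc (Suc 0)) = [False, False]"
| "pref (Suc (Suc (Suc 0))) = [True]"
| "pref (Suc (Suc (Suc (Suc 0)))) = [True, True]"
| "pref _ = []"

text \<open>Sequences (i_j)_{j>=1} are functions nat => nat; the value at 0 is ignored.
  ys is a witness chain y_0 = x, y_1, y_2, ...\<close>

definition code_chain :: "(nat \<Rightarrow> nat) \<Rightarrow> (nat \<Rightarrow> iword) \<Rightarrow> bool" where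
  "code_chain i ys \<longleftrightarrow> (\<forall>j\<ge>1. ys (j - 1) = conc (pref (i j)) (mu (ys j)))"

definition codes :: "(nat \<Rightarrow> nat) \<Rightarrow> iword \<Rightarrow> bool" where
  "codes i x \<longleftrightarrow> (\<forall>j\<ge>1. i j \<in> {0..4}) \<and> (\<exists>ys. ys 0 = x \<and> code_chain i ys)"

definition is_code_of :: "iword \<Rightarrow> (nat \<Rightarrow> nat) \<Rightarrow> bool" where
  "is_code_of x i \<longleftrightarrow> (\<forall>j\<ge>1. i j \<in> {0..4}) \<and>
     (\<exists>ys. ys 0 = x \<and> code_chain i ys \<and> (\<forall>j. ys j \<in> OF))"

definition codes_with_tail :: "(nat \<Rightarrow> nat) \<Rightarrow> iword \<Rightarrow> nat \<Rightarrow> iword \<Rightarrow> bool" where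
  "codes_with_tail i x m w \<longleftrightarrow> (\<exists>ys. ys 0 = x \<and> code_chain i ys \<and> ys m = w)"

datatype state = A | B | C | D | E | F | G | H | I | J | K

fun delta :: "state \<Rightarrow> nat \<Rightarrow> state option" where
  "delta A 0 = Some A" | "delta A (Suc 0) = Some B" | "delta A (Suc (Suc 0)) = Some C"
| "delta A (Suc (Suc (Suc 0))) = Some D" | "delta A (Suc (Suc (Suc (Suc 0)))) = Some E"
| "delta B 0 = Some D" | "delta B (Suc 0) = Some B" | "delta B (Suc (Suc (Suc 0))) = Some E"
| "delta D 0 = Some B" | "delta D (Suc 0) = Some C" | "delta D (Suc (Suc (Suc 0))) = Some D"
| "delta C 0 = Some F" | "delta C (Suc (Suc (Suc 0))) = Some E"
| "delta E 0 = Some I" | "delta E (Suc 0) = Some C"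
| "delta F (Suc (Suc (Suc 0))) = Some G"
| "delta I (Suc 0) = Some J"
| "delta J 0 = Some K" | "delta J (Suc 0) = Some B"
| "delta K 0 = Some J" | "delta K (Suc 0) = Some C"
| "delta G 0 = Some H" | "delta G (Suc (Suc (Suc 0))) = Some D"
| "delta H 0 = Some G" | "delta H (Suc (Suc (Suc 0))) = Some E"
| "delta _ _ = None"

text \<open>s is the state sequence of an infinite path from A labelled (i_j)_{j>=1}:
  s_0 = A and s_{j-1} --i_j--> s_j.\<close>

definition run_from_A :: "(nat \<Rightarrow> nat) \<Rightarrow> (nat \<Rightarrow> state) \<Rightarrow> bool" where
  "run_from_A i s \<longleftrightarrow> s 0 = A \<and> (\<forall>j. delta (s j) (i (Suc j)) = Some (s (Suc j)))"

definition path_label_from_A :: "(nat \<Rightarrow> nat) \<Rightarrow> bool" where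
  "path_label_from_A i \<longleftrightarrow> (\<exists>s. run_from_A i s)"

end

theory Submission
  imports Defs
begin


definition ovl :: "iword \<Rightarrow> nat \<Rightarrow> nat \<Rightarrow> bool" where
  "ovl w i P \<longleftrightarrow> 0 < P \<and> (\<forall>k\<le>P. w (i+k) = w (i+k+P))"

lemma is_overlap_iff:
  "is_overlap u \<longleftrightarrow> (\<exists>P>0. length u = 2*P+1 \<and> (\<forall>k\<le>P. u!k = u!(k+P)))"
proof
  assume "is_overlap u"
  then obtain a x where u: "u = a # x @ a # x @ [a]" unfolding is_overlap_def by blast
  show "\<exists>P>0. length u = 2*P+1 \<and> (\<forall>k\<le>P. u!k = u!(k+P))"
  proof (intro exI conjI allI impI)
    show "0 < Suc (length x)" by simp
    show "length u = 2 * Suc (length x) + 1" using u by simp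
    fix k assume k: "k \<le> Suc (length x)"
    show "u!k = u!(k + Suc (length x))"
    proof (cases k)
      case 0 then show ?thesis using u by (simp add: nth_append)
    next
      case (Suc m)
      then show ?thesis using u k
        by (cases "m < length x") (auto simp: nth_append nth_Cons' split: if_splits)
    qed
  qed
next
  assume "\<exists>P>0. length u = 2*P+1 \<and> (\<forall>k\<le>P. u!k = u!(k+P))"
  then obtain P where P: "P > 0" "length u = 2*P+1" "\<forall>k\<le>P. u!k = u!(k+P)" by blast
  define a where "a = u!0"
  define x where "x = take (P - 1) (drop 1 u)"
  have lx: "length x = P - 1" using P by (simp add: x_def)
  have "u = a # x @ a # x @ [a]"
  proof (rule nth_equalityI)
    show "length u = length (a # x @ a # x @ [a])" using P lx by simp
    fix n assume n: "n < length u"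
    have xn: "\<And>m. m < P - 1 \<Longrightarrow> x!m = u!(Suc m)" using P by (simp add: x_def)
    consider "n = 0" | "0 < n \<and> n < P" | "n = P" | "P < n \<and> n < 2*P" | "n = 2*P" using n P by linarith
    then show "u!n = (a # x @ a # x @ [a])!n"
    proof cases
      case 1 then show ?thesis by (simp add: a_def)
    next
      case 2 then show ?thesis using lx xn by (cases n) (auto simp: nth_append)
    next
      case 3 then show ?thesis using lx P(3)[rule_format, of 0] by (cases n) (auto simp: nth_append a_def)
    next
      case 4
      have e1: "n - P \<le> P" "n - P + P = n" using 4 by auto
      have e: "u!(n-P) = u!n" using P(3)[rule_format, of "n-P"] e1 by simp
      have "(a # x @ a # x @ [a])!n = x!(n-P-1)" using 4 lx P(1)
        by (cases n) (auto simp: nth_append)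
      also have "\<dots> = u!(n-P)"
      proof -
        have "n - P - 1 < P - 1" "Suc (n-P-1) = n - P" using 4 by linarith+
        then show ?thesis using xn[of "n-P-1"] by simp
      qed
      finally show ?thesis using e by simp
    next
      case 5
      have "(a # x @ a # x @ [a])!n = a" using 5 lx P(1)
        by (cases n) (auto simp: nth_append)
      moreover have "u!n = u!P" using P(3)[rule_format, of P] 5 by (simp add: mult_2)
      moreover have "u!P = a" using P(3)[rule_format, of 0] by (simp add: a_def)
      ultimately show ?thesis by simp
    qed
  qed
  then show "is_overlap u" unfolding is_overlap_def by blast
qed

lemma OF_iff: "w \<in> OF \<longleftrightarrow> (\<forall>i P. \<not> ovl w i P)"
proof
  assume "w \<in> OF"
  show "\<forall>i P. \<not> ovl w i P"
  proof (intro allI notI)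
    fix i P assume o: "ovl w i P"
    define u where "u = map (\<lambda>k. w (i+k)) [0..<2*P+1]"
    have un: "\<And>k. k < 2*P+1 \<Longrightarrow> u!k = w(i+k)" unfolding u_def by (subst nth_map) (simp_all del: upt_Suc)
    have lu: "length u = 2*P+1" by (simp add: u_def)
    have "is_overlap u" unfolding is_overlap_iff
    proof (intro exI conjI allI impI)
      show "0 < P" "length u = 2*P+1" using o lu by (auto simp: ovl_def)
      fix k assume "k \<le> P"
      then show "u!k = u!(k+P)" using o un[of k] un[of "k+P"] by (auto simp: ovl_def add.assoc)
    qed
    moreover have "occurs_at u w i" unfolding occurs_at_def using un lu by simp
    ultimately show False using \<open>w \<in> OF\<close> by (auto simp: OF_def overlap_free_def)
  qed
next
  assume h: "\<forall>i P. \<not> ovl w i P"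
  show "w \<in> OF" unfolding OF_def overlap_free_def
  proof (clarsimp)
    fix u i assume "is_overlap u" "occurs_at u w i"
    then obtain P where P: "P > 0" "length u = 2*P+1" "\<forall>k\<le>P. u!k = u!(k+P)"
      unfolding is_overlap_iff by blast
    have "ovl w i P" unfolding ovl_def
    proof (intro conjI allI impI)
      fix k assume k: "k \<le> P"
      have "w (i+k) = u!k" using \<open>occurs_at u w i\<close> P k by (auto simp: occurs_at_def)
      moreover have "w (i+(k+P)) = u!(k+P)" using \<open>occurs_at u w i\<close> P k by (auto simp: occurs_at_def)
      ultimately show "w (i+k) = w (i+k+P)" using P k by (simp add: add.assoc)
    qed (use P in simp)
    then show False using h by blast
  qed
qed



lemma mu_even[simp]: "mu z (2*m) = z m" by (simp add: mu_def)
lemma mu_odd[simp]: "mu z (2*m+1) = (\<not> z m)" by (simp add: mu_def)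
lemma mu_block: "even m \<Longrightarrow> mu z m \<noteq> mu z (Suc m)"
  by (auto simp: mu_def elim!: evenE)

lemma mu_shift: "mu z (n + 2*Q) = mu z n \<longleftrightarrow> z (n div 2 + Q) = z (n div 2)"
  by (auto simp: mu_def add.commute)

lemma ovl_mu_up0: "ovl W i P \<Longrightarrow> ovl (mu W) (2*i) (2*P)"
  unfolding ovl_def
proof (intro conjI allI impI)
  fix k assume h: "0 < P \<and> (\<forall>k\<le>P. W (i + k) = W (i + k + P))" and k: "k \<le> 2*P"
  have d: "(2*i+k) div 2 = i + k div 2" by simp
  have "k div 2 \<le> P" using k by simp
  then have "W (i + k div 2) = W (i + k div 2 + P)" using h by blast
  then show "mu W (2 * i + k) = mu W (2 * i + k + 2 * P)"
    using mu_shift[of W "2*i+k" P] d by simp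
qed simp

lemma ovl_mu_up1: "ovl W i P \<Longrightarrow> ovl (mu W) (2*i+1) (2*P)"
  unfolding ovl_def
proof (intro conjI allI impI)
  fix k assume h: "0 < P \<and> (\<forall>k\<le>P. W (i + k) = W (i + k + P))" and k: "k \<le> 2*P"
  have d: "(2*i+1+k) div 2 = i + (k+1) div 2" by simp
  have "(k+1) div 2 \<le> P" using k by simp
  then have "W (i + (k+1) div 2) = W (i + (k+1) div 2 + P)" using h by blast
  then show "mu W (2 * i + 1 + k) = mu W (2 * i + 1 + k + 2 * P)"
    using mu_shift[of W "2*i+1+k" P] d by simp
qed simp

lemma alt_aaa:
  assumes e: "even e" and a: "\<And>m. e \<le> m \<Longrightarrow> m \<le> e + 3 \<Longrightarrow> mu z m \<noteq> mu z (Suc m)"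
  shows "ovl z (e div 2) 1"
proof -
  obtain c where c: "e = 2*c" using e by (auto elim: evenE)
  have f: "mu z (2*c) \<noteq> mu z (Suc (2*c))" "mu z (Suc (2*c)) \<noteq> mu z (2*Suc c)"
       "mu z (2*Suc c) \<noteq> mu z (Suc (2*Suc c))" "mu z (Suc (2*Suc c)) \<noteq> mu z (2*Suc (Suc c))"
    using a[of "2*c"] a[of "Suc (2*c)"] a[of "2*Suc c"] a[of "Suc (2*Suc c)"] c by simp_all
  have g: "mu z (2*c) = z c" "mu z (2*Suc c) = z (Suc c)" "mu z (2*Suc (Suc c)) = z (Suc (Suc c))"
    by (simp only: mu_even)+
  have "z c = z (Suc c)" "z (Suc c) = z (Suc (Suc c))" using f g by (metis (full_types))+
  then show ?thesis using c by (auto simp: ovl_def le_Suc_eq)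
qed

lemma G1:
  assumes o: "ovl (mu z) i P"
  shows "\<exists>i' P'. P' < P \<and> ovl z i' P'"
proof (cases "even P")
  case True
  then obtain Q where Q: "P = 2*Q" by (auto elim: evenE)
  have Qp: "Q > 0" using o Q by (simp add: ovl_def)
  have h: "\<And>k. k \<le> P \<Longrightarrow> mu z (i+k) = mu z (i+k+P)" using o by (simp add: ovl_def)
  have "ovl z (i div 2) Q" unfolding ovl_def
  proof (intro conjI allI impI)
    fix k assume k: "k \<le> Q"
    have "mu z (i + 2*k) = mu z (i + 2*k + 2*Q)" using h[of "2*k"] k Q by simp
    moreover have "(i + 2*k) div 2 = i div 2 + k" by simp
    ultimately show "z (i div 2 + k) = z (i div 2 + k + Q)"
      using mu_shift[of z "i+2*k" Q] by (simp add: algebra_simps)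
  qed (use Qp in simp)
  then show ?thesis using Q Qp by (intro exI[of _ "i div 2"] exI[of _ Q]) simp
next
  case False
  have h: "\<And>k. k \<le> P \<Longrightarrow> mu z (i+k) = mu z (i+k+P)" using o by (simp add: ovl_def)
  have alt: "\<And>m. i \<le> m \<Longrightarrow> m < i + 2*P \<Longrightarrow> mu z m \<noteq> mu z (Suc m)"
  proof -
    fix m assume m1: "i \<le> m" and m2: "m < i + 2*P"
    show "mu z m \<noteq> mu z (Suc m)"
    proof (cases "even m")
      case True then show ?thesis by (rule mu_block)
    next
      case odd: False
      show ?thesis
      proof (cases "m < i + P")
        case True
        have "even (m+P)" using odd False by simp
        then have "mu z (m+P) \<noteq> mu z (Suc (m+P))" by (rule mu_block)
        moreover have "mu z m = mu z (m+P)" using h[of "m-i"] m1 True by simp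
        moreover have "mu z (Suc m) = mu z (Suc m + P)" using h[of "Suc m - i"] m1 True by simp
        ultimately show ?thesis by simp
      next
        case ge: False
        define m' where "m' = m - P"
        have "even m'" using odd False ge by (simp add: m'_def)
        then have "mu z m' \<noteq> mu z (Suc m')" by (rule mu_block)
        moreover have "mu z m' = mu z m" using h[of "m'-i"] ge m2 by (simp add: m'_def)
        moreover have "mu z (Suc m') = mu z (Suc m)"
        proof -
          have "Suc m' - i \<le> P" "i + (Suc m' - i) = Suc m'" "Suc m' + P = Suc m"
            using ge m2 by (auto simp: m'_def)
          then show ?thesis using h[of "Suc m'-i"] by simp
        qed
        ultimately show ?thesis by simp
      qed
    qed
  qed
  have Pp: "P > 0" using o by (simp add: ovl_def)
  show ?thesis
  proof (cases "P = 1")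
    case True
    then have "mu z i = mu z (Suc i)" using h[of 0] by simp
    then show ?thesis using alt[of i] True by simp
  next
    case P1: False
    then have P3: "P \<ge> 3" using False Pp by presburger
    define e where "e = (if even i then i else i + 1)"
    have "even e" "i \<le> e" "e \<le> i + 1" by (auto simp: e_def)
    then have "ovl z (e div 2) 1" using alt P3 by (intro alt_aaa) auto
    then show ?thesis using P3 by (intro exI[of _ "e div 2"] exI[of _ 1]) simp
  qed
qed



definition cp :: "bool list \<Rightarrow> bool list" where
  "cp v = (if v = [] then [] else [\<not> last v])"

lemma ovl_transfer:
  assumes "ovl X i P" "\<And>k. k \<le> 2*P \<Longrightarrow> X (i+k) = Y (j+k)"
  shows "ovl Y j P"
  unfolding ovl_def
proof (intro conjI allI impI)
  show "0 < P" using assms(1) by (simp add: ovl_def)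
  fix k assume k: "k \<le> P"
  have "Y (j+k) = X (i+k)" using assms(2)[of k] k by simp
  also have "\<dots> = X (i+k+P)" using assms(1) k by (simp add: ovl_def)
  also have "\<dots> = Y (j+(k+P))" using assms(2)[of "k+P"] k by (simp add: add.assoc)
  finally show "Y (j + k) = Y (j + k + P)" by (simp add: add.assoc)
qed

lemma conc_nil[simp]: "conc [] y = y" by (simp add: conc_def fun_eq_iff)

lemma conc1: "conc [a] (mu z) n = mu (conc [\<not>a] z) (Suc n)"
  by (cases n) (auto simp: conc_def mu_def)

lemma conc2: "conc [a, \<not>a] (mu z) = mu (conc [a] z)"
proof
  fix n show "conc [a, \<not>a] (mu z) n = mu (conc [a] z) n"
  proof (cases n)
    case (Suc m) then show ?thesis by (cases m) (auto simp: conc_def mu_def)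
  qed (simp add: conc_def mu_def)
qed

lemma conc3: "n \<ge> 1 \<Longrightarrow> conc [a, a] (mu z) n = mu (conc [\<not>a] z) n"
proof (cases n)
  case (Suc m) then show ?thesis by (cases m) (auto simp: conc_def mu_def)
qed simp

lemma conc_conc: "conc u (conc v w) = conc (u @ v) w"
  by (auto simp: conc_def fun_eq_iff nth_append)

lemma Lup:
  assumes v: "length v \<le> 2" and o: "ovl (conc (cp v) z) i P"
  shows "\<exists>i' P'. ovl (conc v (mu z)) i' P'"
proof -
  consider "v = []" | a where "v = [a]" | a b where "v = [a,b]"
    using v by (cases v rule: remdups_adj.cases) auto
  then show ?thesis
  proof cases
    case 1 then have "ovl (mu z) (2*i) (2*P)" using o ovl_mu_up0[of z i P] by (simp add: cp_def)
    then show ?thesis using 1 by auto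
  next
    case (2 a)
    then have "ovl (mu (conc [\<not>a] z)) (2*i+1) (2*P)" using o ovl_mu_up1 by (auto simp: cp_def)
    then have "ovl (conc [a] (mu z)) (2*i) (2*P)"
      by (rule ovl_transfer) (simp add: conc1)
    then show ?thesis using 2 by blast
  next
    case (3 a b)
    show ?thesis
    proof (cases "b = a")
      case True
      then have "ovl (mu (conc [\<not>a] z)) (2*i+1) (2*P)" using o ovl_mu_up1 3 by (auto simp: cp_def)
      then have "ovl (conc [a,a] (mu z)) (2*i+1) (2*P)"
        by (rule ovl_transfer) (simp add: conc3)
      then show ?thesis using 3 True by blast
    next
      case False
      then have b: "b = (\<not>a)" by auto
      then have "ovl (mu (conc [a] z)) (2*i) (2*P)" using o ovl_mu_up0 3 by (auto simp: cp_def)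
      then have "ovl (conc v (mu z)) (2*i) (2*P)" using 3 b conc2[of a z] by simp
      then show ?thesis by blast
    qed
  qed
qed

lemma Desc:
  assumes v: "length v \<le> 2" and o: "ovl (conc v (mu z)) i P"
  shows "(\<exists>i' P'. P' < P \<and> ovl (conc (cp v) z) i' P') \<or>
         (\<exists>a. v = [a,a] \<and> (z 0 = a \<or> (z 0 = (\<not>a) \<and> z 1 = a \<and> z 2 = a)))"
proof -
  consider "v = []" | a where "v = [a]" | a b where "v = [a,b]"
    using v by (cases v rule: remdups_adj.cases) auto
  then show ?thesis
  proof cases
    case 1 then show ?thesis using o G1 by (auto simp: cp_def)
  next
    case (2 a)
    have o2: "ovl (conc [a] (mu z)) i P" using o 2 by simp
    have "ovl (mu (conc [\<not>a] z)) (Suc i) P"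
      by (rule ovl_transfer[OF o2]) (simp add: conc1)
    then show ?thesis using G1 2 by (auto simp: cp_def)
  next
    case (3 a b)
    show ?thesis
    proof (cases "b = a")
      case False
      then have b: "b = (\<not>a)" by auto
      have "ovl (mu (conc [a] z)) i P" using o 3 b conc2[of a z] by simp
      then show ?thesis using G1 3 b by (auto simp: cp_def)
    next
      case True
      let ?W = "conc [\<not>a] z"
      let ?X = "conc [a,a] (mu z)"
      have h: "\<And>k. k \<le> P \<Longrightarrow> ?X (i+k) = ?X (i+k+P)" using o 3 True by (simp add: ovl_def)
      have Pp: "P > 0" using o by (simp add: ovl_def)
      show ?thesis
      proof (cases "i \<ge> 1")
        case True
        have o2: "ovl ?X i P" using o 3 \<open>b = a\<close> by simp
        have "ovl (mu ?W) i P"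
          by (rule ovl_transfer[OF o2]) (use True in \<open>simp add: conc3\<close>)
        then show ?thesis using G1 3 \<open>b = a\<close> by (auto simp: cp_def)
      next
        case False
        then have i0: "i = 0" by simp
        have X0: "?X 0 = a" "?X 1 = a" by (simp_all add: conc_def)
        have Xs: "\<And>m. ?X (Suc (Suc m)) = mu z m" by (simp add: conc_def)
        show ?thesis
        proof (cases "even P")
          case True
          then obtain Q0 where "P = 2*Q0" by (auto elim: evenE)
          then obtain Q where Q: "P = Suc (Suc (2*Q))" using Pp by (cases Q0) auto
          have "?X P = a" using h[of 0] i0 X0 by simp
          moreover have "?X (Suc P) = a" using h[of 1] i0 X0 Pp by simp
          moreover have "mu z (2*Q) \<noteq> mu z (Suc (2*Q))" by (rule mu_block) simp
          ultimately show ?thesis using Q Xs by (simp del: mu_even)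
        next
          case odd: False
          have "P \<noteq> 2" "P \<noteq> 4" "P \<noteq> 6" using odd by auto
          then consider "P = 1" | "P = 3" | "P = 5" | "P \<ge> 7"
            using Pp by linarith
          then show ?thesis
          proof cases
            case 1
            have "?X (Suc (Suc 0)) = a" using h[of 1] i0 X0 1 by simp
            then have "z 0 = a" by (simp add: conc_def mu_def)
            then show ?thesis using 3 \<open>b = a\<close> by blast
          next
            case P3: 2
            have "?X 3 = a" "?X 4 = a" "?X 6 = ?X 3"
              using h[of 0] h[of 1] h[of 3] i0 X0 P3 by simp_all
            then have "z 0 = (\<not>a)" "z 1 = a" "z 2 = a" by (auto simp: conc_def mu_def)
            then show ?thesis using 3 \<open>b = a\<close> by blast
          next
            case P5: 3
            have Xv: "\<And>n. ?X n = (if n < 2 then a else mu z (n-2))"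
              by (auto simp: conc_def nth_Cons' numeral_2_eq_2)
            have "a = (\<not> z 1)" using h[of 0] i0 P5 by (simp add: Xv mu_def)
            moreover have "a = z 2" using h[of 1] i0 P5 by (simp add: Xv mu_def)
            moreover have "z 0 = (\<not> z 2)" using h[of 2] i0 P5 by (simp add: Xv mu_def)
            moreover have "(\<not> z 0) = z 3" using h[of 3] i0 P5 by (simp add: Xv mu_def)
            moreover have "(\<not> z 1) = z 4" using h[of 5] i0 P5 by (simp add: Xv mu_def)
            ultimately have "z 2 = a" "z 3 = a" "z 4 = a" by auto
            then have "ovl ?W 3 1" by (simp add: ovl_def conc_def le_Suc_eq numeral_eq_Suc)
            then show ?thesis using 3 \<open>b = a\<close> P5 by (auto simp: cp_def)
          next
            case P7: 4
            have Y: "\<And>n. n \<ge> 1 \<Longrightarrow> ?X n = mu ?W n" by (rule conc3)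
            have alt: "\<And>m. 1 \<le> m \<Longrightarrow> m \<le> P - 1 \<Longrightarrow> mu ?W m \<noteq> mu ?W (Suc m)"
            proof -
              fix m assume m1: "1 \<le> m" and m2: "m \<le> P - 1"
              show "mu ?W m \<noteq> mu ?W (Suc m)"
              proof (cases "even m")
                case True then show ?thesis by (rule mu_block)
              next
                case False
                have "even (m+P)" using False odd by simp
                then have "mu ?W (m+P) \<noteq> mu ?W (Suc (m+P))" by (rule mu_block)
                moreover have "mu ?W m = mu ?W (m+P)" using h[of m] m1 m2 Y[of m] Y[of "m+P"] i0 by simp
                moreover have "mu ?W (Suc m) = mu ?W (Suc m+P)" using h[of "Suc m"] m1 m2 Y[of "Suc m"] Y[of "Suc m+P"] i0 by simp
                ultimately show ?thesis by simp
              qed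
            qed
            have "ovl ?W (2 div 2) 1" by (rule alt_aaa) (use alt P7 in auto)
            then show ?thesis using 3 \<open>b = a\<close> P7 by (auto simp: cp_def)
          qed
        qed
      qed
    qed
  qed
qed



definition all_states :: "state list" where
  "all_states = [A,B,C,D,E,F,G,H,I,J,K]"

lemma in_all_states: "q \<in> set all_states"
  by (cases q) (auto simp: all_states_def)

fun ctx :: "state \<Rightarrow> bool list" where
  "ctx A = []" | "ctx B = [True]" | "ctx C = [True]" | "ctx D = [False]" | "ctx E = [False]"
| "ctx F = [False]" | "ctx G = [False]" | "ctx H = [True]" | "ctx I = [True]" | "ctx J = [True]"
| "ctx K = [False]"

fun forbs :: "state \<Rightarrow> bool list list" where
  "forbs A = []" | "forbs B = []" | "forbs C = [[False],[True,False,False]]" | "forbs D = []"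
| "forbs E = [[True],[False,True,True]]" | "forbs F = [[False],[True,False]]" | "forbs G = [[False]]"
| "forbs H = [[False]]" | "forbs I = [[True],[False,True]]" | "forbs J = [[True]]" | "forbs K = [[True]]"

fun words :: "nat \<Rightarrow> bool list list" where
  "words 0 = [[]]"
| "words (Suc n) = concat (map (\<lambda>w. [False#w, True#w]) (words n))"

lemma words_complete: "length w = n \<Longrightarrow> w \<in> set (words n)"
proof (induction n arbitrary: w)
  case 0 then show ?case by simp
next
  case (Suc n)
  obtain a w' where aw: "w = a # w'" "length w' = n" using Suc.prems by (cases w) auto
  have "w' \<in> set (words n)" using Suc.IH aw(2) by blast
  then show ?case using aw(1) by (cases a) auto
qed

definition lov :: "bool list \<Rightarrow> bool" where
  "lov w = (\<exists>i\<in>set [0..<length w]. \<exists>P\<in>set [1..<length w]. i+2*P < length w \<and>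
     (\<forall>k\<in>set [0..<Suc P]. w!(i+k) = w!(i+k+P)))"

definition lforb :: "state \<Rightarrow> bool list \<Rightarrow> bool" where
  "lforb q u = (\<exists>f\<in>set (forbs q). take (length f) u = f)"

definition chk_shape :: bool where
  "chk_shape = (\<forall>q\<in>set all_states. \<forall>k\<in>set [0..<5]. case delta q k of None \<Rightarrow> True
     | Some q' \<Rightarrow> length (ctx q @ pref k) \<le> 2 \<and> ctx q' = cp (ctx q @ pref k) \<and>
        (case ctx q @ pref k of [a,b] \<Rightarrow> (a = b \<longrightarrow> forbs q' = [[a],[\<not>a,a,a]]) | _ \<Rightarrow> True))"

definition chk_FB :: bool where
  "chk_FB = (\<forall>q\<in>set all_states. \<forall>k\<in>set [0..<5]. case delta q k of None \<Rightarrow> True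
     | Some q' \<Rightarrow> (\<forall>w\<in>set (words 3). \<forall>f\<in>set (forbs q). take (length f) (pref k @ mu_list w) = f \<longrightarrow>
        (\<exists>g\<in>set (forbs q'). take (length g) w = g \<and> length g \<le> length f \<and> (k \<noteq> 0 \<longrightarrow> length g < length f))))"

definition chk_U2 :: bool where
  "chk_U2 = (\<forall>q\<in>set all_states. \<forall>k\<in>set [0..<5]. case delta q k of None \<Rightarrow> True
     | Some q' \<Rightarrow> (\<forall>w\<in>set (words 3). lforb q' w \<longrightarrow>
          lov (ctx q @ pref k @ mu_list w) \<or> lforb q (pref k @ mu_list w)))"

definition chk_N :: bool where
  "chk_N = (\<forall>q\<in>set all_states. \<forall>k\<in>set [0..<5]. delta q k = None \<longrightarrow>
     (\<forall>w\<in>set (words 2). lov (ctx q @ pref k @ mu_list w) \<or> lforb q (pref k @ mu_list w)))"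

lemma chk_shape: chk_shape by code_simp
lemma chk_FB: chk_FB by code_simp
lemma chk_U2: chk_U2 by code_simp
lemma chk_N: chk_N by code_simp



definition FORB :: "state \<Rightarrow> iword \<Rightarrow> bool" where
  "FORB q z = (\<exists>f\<in>set (forbs q). \<forall>k<length f. z k = f!k)"

definition Good :: "state \<Rightarrow> iword \<Rightarrow> bool" where
  "Good q z = ((\<forall>i P. \<not> ovl (conc (ctx q) z) i P) \<and> \<not> FORB q z)"

lemma Good_A: "Good A z \<longleftrightarrow> z \<in> OF"
  by (simp add: Good_def FORB_def OF_iff)

lemma forbs_len: "f \<in> set (forbs q) \<Longrightarrow> 1 \<le> length f \<and> length f \<le> 3"
  by (cases q) auto

lemma mu_list_Cons[simp]: "mu_list (a#w) = a # (\<not>a) # mu_list w"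
  by (simp add: mu_list_def)
lemma mu_list_Nil[simp]: "mu_list [] = []" by (simp add: mu_list_def)

lemma mu_list_len[simp]: "length (mu_list w) = 2 * length w"
  by (induction w) auto

lemma mu_list_nth: "m < 2 * length w \<Longrightarrow> mu_list w ! m = (if even m then w!(m div 2) else \<not> w!(m div 2))"
proof (induction w arbitrary: m)
  case Nil then show ?case by simp
next
  case (Cons a w)
  show ?case
  proof (cases m)
    case 0 then show ?thesis by simp
  next
    case (Suc m1)
    show ?thesis
    proof (cases m1)
      case 0 then show ?thesis using Suc by simp
    next
      case (Suc m2)
      have "m2 < 2 * length w" using Cons.prems \<open>m = Suc m1\<close> Suc by simp
      then show ?thesis using Cons.IH[of m2] \<open>m = Suc m1\<close> Suc by auto
    qed
  qed
qed

lemma map_conc: "map (conc c y) [0..<length c + m] = c @ map y [0..<m]"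
  by (rule nth_equalityI) (auto simp: conc_def nth_append simp del: upt_Suc)

lemma map_conc_mu: "map (conc p (mu z)) [0..<length p + 2*n] = p @ mu_list (map z [0..<n])"
proof (rule nth_equalityI)
  show "length (map (conc p (mu z)) [0..<length p + 2*n]) = length (p @ mu_list (map z [0..<n]))" by simp
next
  fix m assume m: "m < length (map (conc p (mu z)) [0..<length p + 2 * n])"
  show "map (conc p (mu z)) [0..<length p + 2 * n] ! m = (p @ mu_list (map z [0..<n])) ! m"
  proof (cases "m < length p")
    case True then show ?thesis using m by (simp add: conc_def nth_append del: upt_Suc)
  next
    case False
    have "m - length p < 2 * n" using m False by simp
    then show ?thesis using m False
      by (simp add: conc_def nth_append mu_list_nth mu_def del: upt_Suc)
  qed
qed

lemma map_full: "map (conc c (conc p (mu z))) [0..<length c + (length p + 2*n)] = c @ p @ mu_list (map z [0..<n])"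
  by (simp only: map_conc[of c "conc p (mu z)" "length p + 2*n"] map_conc_mu)

lemma lov_ovl: assumes "lov (map y [0..<n])" shows "\<exists>i P. ovl y i P"
proof -
  obtain i P where iP: "P \<ge> 1" "i + 2*P < n"
    "\<forall>k\<in>set [0..<Suc P]. map y [0..<n] ! (i+k) = map y [0..<n] ! (i+k+P)"
    using assms unfolding lov_def by (auto simp del: upt_Suc)
  have "ovl y i P" unfolding ovl_def
  proof (intro conjI allI impI)
    fix k assume k: "k \<le> P"
    have "map y [0..<n] ! (i+k) = map y [0..<n] ! (i+k+P)" using iP(3) k by (simp del: upt_Suc)
    moreover have "i+k < n" "i+k+P < n" using k iP by auto
    ultimately show "y (i+k) = y (i+k+P)" by (simp del: upt_Suc)
  qed (use iP in simp)
  then show ?thesis by blast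
qed

lemma take_map_upt: "m \<le> n \<Longrightarrow> take m (map y [0..<n]) = map y [0..<m]"
  by (rule nth_equalityI) (simp_all del: upt_Suc)

lemma map_upt_eq: "map y [0..<length f] = f \<longleftrightarrow> (\<forall>k<length f. y k = f!k)"
proof
  assume "map y [0..<length f] = f"
  then show "\<forall>k<length f. y k = f!k" by (metis add_0 diff_zero nth_map_upt)
next
  assume "\<forall>k<length f. y k = f!k"
  then show "map y [0..<length f] = f" by (intro nth_equalityI) (simp_all del: upt_Suc)
qed

lemma lforb_FORB: "n \<ge> 3 \<Longrightarrow> lforb q (map y [0..<n]) \<longleftrightarrow> FORB q y"
proof -
  assume n: "n \<ge> 3"
  have "\<And>f. f \<in> set (forbs q) \<Longrightarrow> take (length f) (map y [0..<n]) = f \<longleftrightarrow> (\<forall>k<length f. y k = f!k)"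
  proof -
    fix f assume "f \<in> set (forbs q)"
    then have "length f \<le> n" using forbs_len[of f q] n by simp
    then have "take (length f) (map y [0..<n]) = map y [0..<length f]" by (rule take_map_upt)
    then show "take (length f) (map y [0..<n]) = f \<longleftrightarrow> (\<forall>k<length f. y k = f!k)"
      using map_upt_eq[of y f] by simp
  qed
  then show ?thesis unfolding lforb_def FORB_def by blast
qed

lemma delta_lt5: "delta q k = Some q' \<Longrightarrow> k < 5"
proof (rule ccontr)
  assume d: "delta q k = Some q'" and "\<not> k < 5"
  then have e: "k = Suc (Suc (Suc (Suc (Suc (k-5)))))" by arith
  have "delta q k = None" by (subst e) (cases q; simp)
  then show False using d by simp
qed

lemma T_shape:
  assumes "delta q k = Some q'"
  shows "length (ctx q @ pref k) \<le> 2 \<and> ctx q' = cp (ctx q @ pref k) \<and>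
         (\<forall>a. ctx q @ pref k = [a,a] \<longrightarrow> forbs q' = [[a],[\<not>a,a,a]])"
proof -
  have "k \<in> set [0..<5]" using delta_lt5[OF assms] by simp
  then have h: "case delta q k of None \<Rightarrow> True
     | Some q' \<Rightarrow> length (ctx q @ pref k) \<le> 2 \<and> ctx q' = cp (ctx q @ pref k) \<and>
        (case ctx q @ pref k of [a,b] \<Rightarrow> (a = b \<longrightarrow> forbs q' = [[a],[\<not>a,a,a]]) | _ \<Rightarrow> True)"
    using chk_shape in_all_states[of q] unfolding chk_shape_def by blast
  then show ?thesis using assms by auto
qed

lemma Down:
  assumes d: "delta q k = Some q'" and o: "ovl (conc (ctx q) (conc (pref k) (mu z))) i P"
  shows "(\<exists>i' P'. P' < P \<and> ovl (conc (ctx q') z) i' P') \<or> FORB q' z"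
proof -
  let ?v = "ctx q @ pref k"
  have sh: "length ?v \<le> 2" "ctx q' = cp ?v" "\<forall>a. ?v = [a,a] \<longrightarrow> forbs q' = [[a],[\<not>a,a,a]]"
    using T_shape[OF d] by auto
  have "ovl (conc ?v (mu z)) i P" using o by (simp add: conc_conc)
  from Desc[OF sh(1) this]
  show ?thesis
  proof
    assume "\<exists>i' P'. P' < P \<and> ovl (conc (cp ?v) z) i' P'"
    then show ?thesis using sh(2) by simp
  next
    assume "\<exists>a. ?v = [a,a] \<and> (z 0 = a \<or> (z 0 = (\<not>a) \<and> z 1 = a \<and> z 2 = a))"
    then obtain a where a: "?v = [a,a]" "z 0 = a \<or> (z 0 = (\<not>a) \<and> z 1 = a \<and> z 2 = a)" by blast
    have fq: "forbs q' = [[a],[\<not>a,a,a]]" using sh(3) a(1) by blast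
    from a(2) show ?thesis
    proof
      assume "z 0 = a" then show ?thesis unfolding FORB_def fq by auto
    next
      assume h: "z 0 = (\<not>a) \<and> z 1 = a \<and> z 2 = a"
      have "\<forall>k<3. z k = [\<not>a,a,a]!k"
      proof (intro allI impI)
        fix k :: nat assume "k < 3"
        then have "k = 0 \<or> k = 1 \<or> k = 2" by arith
        then show "z k = [\<not>a,a,a]!k" using h by auto
      qed
      then show ?thesis unfolding FORB_def fq by auto
    qed
  qed
qed

lemma Up:
  assumes d: "delta q k = Some q'" and g: "Good q (conc (pref k) (mu z))"
  shows "Good q' z"
proof -
  let ?v = "ctx q @ pref k"
  have sh: "length ?v \<le> 2" "ctx q' = cp ?v"
    using T_shape[OF d] by auto
  have noov: "\<And>i P. \<not> ovl (conc ?v (mu z)) i P" using g by (simp add: Good_def conc_conc)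
  have "\<forall>i P. \<not> ovl (conc (ctx q') z) i P"
  proof (intro allI notI)
    fix i P assume "ovl (conc (ctx q') z) i P"
    then have "ovl (conc (cp ?v) z) i P" using sh by simp
    then show False using Lup[OF sh(1)] noov by blast
  qed
  moreover have "\<not> FORB q' z"
  proof
    assume fz: "FORB q' z"
    let ?w = "map z [0..<3]"
    have lw: "lforb q' ?w" using fz lforb_FORB[of 3 q' z] by simp
    have "k \<in> set [0..<5]" using delta_lt5[OF d] by simp
    then have "case delta q k of None \<Rightarrow> True
     | Some q' \<Rightarrow> (\<forall>w\<in>set (words 3). lforb q' w \<longrightarrow>
          lov (ctx q @ pref k @ mu_list w) \<or> lforb q (pref k @ mu_list w))"
      using chk_U2 in_all_states[of q] unfolding chk_U2_def by blast
    then have "lov (ctx q @ pref k @ mu_list ?w) \<or> lforb q (pref k @ mu_list ?w)"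
      using d lw words_complete[of ?w 3] by simp
    then show False
    proof
      assume "lov (ctx q @ pref k @ mu_list ?w)"
      then have "lov (map (conc (ctx q) (conc (pref k) (mu z))) [0..<length (ctx q) + (length (pref k) + 2*3)])"
        by (simp only: map_full)
      then show False using lov_ovl g by (auto simp: Good_def)
    next
      assume "lforb q (pref k @ mu_list ?w)"
      then have "lforb q (map (conc (pref k) (mu z)) [0..<length (pref k) + 2*3])"
        by (simp only: map_conc_mu)
      then have "FORB q (conc (pref k) (mu z))" using lforb_FORB by simp
      then show False using g by (simp add: Good_def)
    qed
  qed
  ultimately show ?thesis by (simp add: Good_def)
qed

lemma Nontrans:
  assumes d: "delta q k = None" and k: "k < 5"
  shows "\<not> Good q (conc (pref k) (mu z))"
proof
  assume g: "Good q (conc (pref k) (mu z))"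
  let ?w = "map z [0..<2]"
  have "k \<in> set [0..<5]" using k by simp
  then have "lov (ctx q @ pref k @ mu_list ?w) \<or> lforb q (pref k @ mu_list ?w)"
    using chk_N in_all_states[of q] d words_complete[of ?w 2] unfolding chk_N_def by simp
  then show False
  proof
    assume "lov (ctx q @ pref k @ mu_list ?w)"
    then have "lov (map (conc (ctx q) (conc (pref k) (mu z))) [0..<length (ctx q) + (length (pref k) + 2*2)])"
      by (simp only: map_full)
    then show False using lov_ovl g by (auto simp: Good_def)
  next
    assume "lforb q (pref k @ mu_list ?w)"
    then have "lforb q (map (conc (pref k) (mu z)) [0..<length (pref k) + 2*2])"
      by (simp only: map_conc_mu)
    then have "FORB q (conc (pref k) (mu z))" using lforb_FORB by simp
    then show False using g by (simp add: Good_def)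
  qed
qed

lemma FBstep:
  assumes d: "delta q k = Some q'" and f: "f \<in> set (forbs q)"
    and h: "\<forall>m<length f. conc (pref k) (mu z) m = f!m"
  shows "\<exists>g\<in>set (forbs q'). (\<forall>m<length g. z m = g!m) \<and> length g \<le> length f \<and> (k \<noteq> 0 \<longrightarrow> length g < length f)"
proof -
  let ?w = "map z [0..<3]"
  have "k \<in> set [0..<5]" using delta_lt5[OF d] by simp
  then have "case delta q k of None \<Rightarrow> True
     | Some q' \<Rightarrow> (\<forall>w\<in>set (words 3). \<forall>f\<in>set (forbs q). take (length f) (pref k @ mu_list w) = f \<longrightarrow>
        (\<exists>g\<in>set (forbs q'). take (length g) w = g \<and> length g \<le> length f \<and> (k \<noteq> 0 \<longrightarrow> length g < length f)))"
    by (rule chk_FB[unfolded chk_FB_def, rule_format, OF in_all_states])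
  then have c: "\<forall>w\<in>set (words 3). \<forall>f\<in>set (forbs q). take (length f) (pref k @ mu_list w) = f \<longrightarrow>
        (\<exists>g\<in>set (forbs q'). take (length g) w = g \<and> length g \<le> length f \<and> (k \<noteq> 0 \<longrightarrow> length g < length f))"
    using d by simp
  have lf: "length f \<le> 3" using forbs_len[OF f] by simp
  have "take (length f) (map (conc (pref k) (mu z)) [0..<length (pref k) + 2*3]) = map (conc (pref k) (mu z)) [0..<length f]"
    using lf by (intro take_map_upt) simp
  also have "\<dots> = f" using h map_upt_eq[of "conc (pref k) (mu z)" f] by simp
  finally have "take (length f) (pref k @ mu_list ?w) = f" by (simp only: map_conc_mu)
  have "\<exists>g. g \<in> set (forbs q') \<and> take (length g) ?w = g \<and> length g \<le> length f \<and>
      (k \<noteq> 0 \<longrightarrow> length g < length f)"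
  proof -
    have "?w \<in> set (words 3)" by (rule words_complete) simp
    then show ?thesis using c f \<open>take (length f) (pref k @ mu_list ?w) = f\<close> by blast
  qed
  then obtain g where g: "g \<in> set (forbs q')" "take (length g) ?w = g" "length g \<le> length f"
      "k \<noteq> 0 \<longrightarrow> length g < length f" by blast
  have "length g \<le> 3" using forbs_len[OF g(1)] by simp
  then have "take (length g) ?w = map z [0..<length g]" by (rule take_map_upt)
  then have "\<forall>m<length g. z m = g!m" using g(2) map_upt_eq[of z g] by simp
  then show ?thesis using g by blast
qed



section \<open>Thue-Morse\<close>

abbreviation W :: "nat \<Rightarrow> bool \<Rightarrow> bool list" where "W k a \<equiv> (mu_list ^^ k) [a]"

lemma mu_list_append[simp]: "mu_list (u @ v) = mu_list u @ mu_list v"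
  by (simp add: mu_list_def)

lemma mu_list_not: "mu_list (map Not w) = map Not (mu_list w)"
  by (induction w) auto

lemma W_len: "length (W k a) = 2^k"
  by (induction k) auto

lemma W_not: "W k (\<not>a) = map Not (W k a)"
  by (induction k) (auto simp: mu_list_not)

lemma W_Suc: "W (Suc k) a = W k a @ W k (\<not>a)"
proof (induction k arbitrary: a)
  case 0 then show ?case by simp
next
  case (Suc k)
  have "W (Suc (Suc k)) a = mu_list (W (Suc k) a)" by simp
  also have "\<dots> = mu_list (W k a @ W k (\<not>a))" using Suc by simp
  also have "\<dots> = W (Suc k) a @ W (Suc k) (\<not>a)" by simp
  finally show ?case .
qed

lemma W_stable: "n < 2^k \<Longrightarrow> k \<le> k' \<Longrightarrow> W k' a ! n = W k a ! n"
proof (induction k' )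
  case 0 then show ?case by simp
next
  case (Suc k')
  show ?case
  proof (cases "k = Suc k'")
    case True then show ?thesis by simp
  next
    case False
    then have kk: "k \<le> k'" using Suc by simp
    have "n < 2^k'" using Suc(2) kk by (meson less_le_trans one_le_numeral power_increasing)
    then have "W (Suc k') a ! n = W k' a ! n" by (simp only: W_Suc nth_append W_len) simp
    then show ?thesis using Suc kk by simp
  qed
qed

lemma mu_omega_W: "n < 2^k \<Longrightarrow> mu_omega a n = W k a ! n"
proof -
  assume n: "n < 2^k"
  have n2: "n < 2^Suc n" by (induction n) auto
  show ?thesis
  proof (cases "k \<le> Suc n")
    case True then show ?thesis using W_stable[OF n True] by (simp add: mu_omega_def)
  next
    case False then show ?thesis using W_stable[OF n2, of k] by (simp add: mu_omega_def)
  qed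
qed

lemma mu_omega_fix: "mu (mu_omega a) = mu_omega a"
proof
  fix n
  define K where "K = Suc n"
  have nK: "n < 2^K" unfolding K_def by (induction n) auto
  have nK2: "n < 2 * length (W K a)" using nK by (simp add: W_len)
  have "mu_omega a n = W (Suc K) a ! n" using nK by (intro mu_omega_W) simp
  also have "\<dots> = mu_list (W K a) ! n" by simp
  also have "\<dots> = (if even n then W K a ! (n div 2) else \<not> W K a ! (n div 2))"
    using nK2 by (rule mu_list_nth)
  also have "\<dots> = mu (mu_omega a) n"
    using mu_omega_W[of "n div 2" K a] nK by (simp add: mu_def)
  finally show "mu (mu_omega a) n = mu_omega a n" by simp
qed

lemma mu_omega_not: "mu_omega True n = (\<not> mu_omega False n)"
proof -
  have "n < 2^Suc n" by (induction n) auto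
  then show ?thesis
    using W_not[of "Suc n" False] W_len[of "Suc n" False] by (simp add: mu_omega_def)
qed

lemma thue_fix: "mu thue = thue" by (simp add: thue_def mu_omega_fix)
lemma thue_bar_fix: "mu thue_bar = thue_bar" by (simp add: thue_bar_def mu_omega_fix)
lemma thue_bar_not: "thue_bar n = (\<not> thue n)" by (simp add: thue_def thue_bar_def mu_omega_not)
lemma thue0: "thue 0 = False" by (simp add: thue_def mu_omega_def)
lemma thue_bar0: "thue_bar 0 = True" by (simp add: thue_bar_not thue0)
lemma thue_neq: "thue \<noteq> thue_bar" using thue0 thue_bar0 by auto

lemma tail_char:
  assumes h: "\<And>j. j \<ge> m \<Longrightarrow> ys j = mu (ys (Suc j))"
  shows "ys m = thue \<or> ys m = thue_bar"
proof -
  have c: "\<forall>j\<ge>m. ys j n = (ys j 0 \<noteq> thue n)" for n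
  proof (induction n rule: less_induct)
    case (less n)
    show ?case
    proof (intro allI impI)
      fix j assume j: "j \<ge> m"
      show "ys j n = (ys j 0 \<noteq> thue n)"
      proof (cases "n = 0")
        case True then show ?thesis by (simp add: thue0)
      next
        case False
        have z: "ys j 0 = ys (Suc j) 0" using h[OF j] by (metis mu_even mult_0_right)
        have "ys j n = mu (ys (Suc j)) n" using h[OF j] by simp
        also have "\<dots> = (if even n then ys (Suc j) (n div 2) else \<not> ys (Suc j) (n div 2))" by (simp add: mu_def)
        also have "\<dots> = (if even n then (ys (Suc j) 0 \<noteq> thue (n div 2)) else \<not> (ys (Suc j) 0 \<noteq> thue (n div 2)))"
          using less.IH[of "n div 2"] False j by simp
        also have "\<dots> = (ys j 0 \<noteq> mu thue n)" using z by (auto simp: mu_def)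
        finally show ?thesis by (simp add: thue_fix)
      qed
    qed
  qed
  show ?thesis
  proof (cases "ys m 0")
    case True
    have "ys m n = thue_bar n" for n
    proof -
      have "ys m n = (ys m 0 \<noteq> thue n)" using c[of n] by blast
      then show ?thesis using True by (simp add: thue_bar_not)
    qed
    then have "ys m = thue_bar" by blast
    then show ?thesis by simp
  next
    case False
    have "ys m n = thue n" for n
    proof -
      have "ys m n = (ys m 0 \<noteq> thue n)" using c[of n] by blast
      then show ?thesis using False by simp
    qed
    then have "ys m = thue" by blast
    then show ?thesis by simp
  qed
qed



lemma chain_step: "code_chain i ys \<Longrightarrow> ys j = conc (pref (i (Suc j))) (mu (ys (Suc j)))"
proof -
  assume "code_chain i ys"
  then have "ys (Suc j - 1) = conc (pref (i (Suc j))) (mu (ys (Suc j)))"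
    unfolding code_chain_def by (erule_tac x="Suc j" in allE) simp
  then show ?thesis by simp
qed

lemma chain_intro: "(\<And>j. ys j = conc (pref (i (Suc j))) (mu (ys (Suc j)))) \<Longrightarrow> code_chain i ys"
  unfolding code_chain_def
proof (intro allI impI)
  fix j :: nat assume h: "\<And>j. ys j = conc (pref (i (Suc j))) (mu (ys (Suc j)))" and j: "1 \<le> j"
  then obtain j' where "j = Suc j'" by (cases j) auto
  then show "ys (j - 1) = conc (pref (i j)) (mu (ys j))" using h[of j'] by simp
qed

lemma run_step: "run_from_A i s \<Longrightarrow> delta (s j) (i (Suc j)) = Some (s (Suc j))"
  by (simp add: run_from_A_def)

lemma run_lt5: "run_from_A i s \<Longrightarrow> j \<ge> 1 \<Longrightarrow> i j < 5"
proof -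
  assume r: "run_from_A i s" and j: "j \<ge> 1"
  then obtain j' where "j = Suc j'" by (cases j) auto
  then show ?thesis using delta_lt5[OF run_step[OF r, of j']] by simp
qed

lemma run_range: "run_from_A i s \<Longrightarrow> \<forall>j\<ge>1. i j \<in> {0..4}"
  using run_lt5 by fastforce

lemma Good_run:
  assumes r: "run_from_A i s" and ch: "code_chain i ys" and g: "Good A (ys 0)"
  shows "Good (s j) (ys j)"
proof (induction j)
  case 0 then show ?case using g r by (simp add: run_from_A_def)
next
  case (Suc j)
  have "Good (s j) (conc (pref (i (Suc j))) (mu (ys (Suc j))))" using Suc chain_step[OF ch, of j] by simp
  then show ?case using Up[OF run_step[OF r]] by blast
qed

lemma noOV:
  assumes r: "run_from_A i s" and ch: "code_chain i ys" and nf: "\<And>j. \<not> FORB (s j) (ys j)"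
  shows "ys 0 \<in> OF"
proof -
  have "\<forall>j i'. \<not> ovl (conc (ctx (s j)) (ys j)) i' P" for P
  proof (induction P rule: less_induct)
    case (less P)
    show ?case
    proof (intro allI notI)
      fix j i' assume o: "ovl (conc (ctx (s j)) (ys j)) i' P"
      then have "ovl (conc (ctx (s j)) (conc (pref (i (Suc j))) (mu (ys (Suc j))))) i' P"
        using chain_step[OF ch, of j] by simp
      from Down[OF run_step[OF r] this]
      show False using less.IH nf by blast
    qed
  qed
  then have "\<forall>i' P. \<not> ovl (conc (ctx (s 0)) (ys 0)) i' P" by blast
  moreover have "s 0 = A" using r by (simp add: run_from_A_def)
  ultimately show ?thesis by (simp add: OF_iff)
qed

definition FL :: "state \<Rightarrow> iword \<Rightarrow> nat \<Rightarrow> bool" where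
  "FL q z L = (\<exists>f\<in>set (forbs q). length f \<le> L \<and> (\<forall>m<length f. z m = f!m))"

lemma FL_step:
  assumes r: "run_from_A i s" and ch: "code_chain i ys" and fl: "FL (s j) (ys j) L"
  shows "FL (s (Suc j)) (ys (Suc j)) L \<and> (i (Suc j) \<noteq> 0 \<longrightarrow> FL (s (Suc j)) (ys (Suc j)) (L - 1))"
proof -
  obtain f where f: "f \<in> set (forbs (s j))" "length f \<le> L" "\<forall>m<length f. ys j m = f!m"
    using fl by (auto simp: FL_def)
  have "\<forall>m<length f. conc (pref (i (Suc j))) (mu (ys (Suc j))) m = f!m"
    using f(3) chain_step[OF ch, of j] by simp
  from FBstep[OF run_step[OF r] f(1) this]
  obtain g where g: "g \<in> set (forbs (s (Suc j)))" "\<forall>m<length g. ys (Suc j) m = g!m" "length g \<le> length f"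
    "i (Suc j) \<noteq> 0 \<longrightarrow> length g < length f" by blast
  have "length g \<le> L" using g(3) f(2) by simp
  moreover have "i (Suc j) \<noteq> 0 \<longrightarrow> length g \<le> L - 1" using g(4) f(2) by auto
  ultimately show ?thesis using g(1,2) unfolding FL_def by blast
qed

lemma FL_later:
  assumes r: "run_from_A i s" and ch: "code_chain i ys" and fl: "FL (s j) (ys j) L"
  shows "FL (s (j+d)) (ys (j+d)) L"
  by (induction d) (use fl FL_step[OF r ch] in auto)

lemma FL_0: "\<not> FL q z 0"
  using forbs_len by (fastforce simp: FL_def)

lemma FORB_FL: "FORB q z \<Longrightarrow> FL q z 3"
  using forbs_len by (fastforce simp: FL_def FORB_def)

lemma noFB_nz:
  assumes r: "run_from_A i s" and ch: "code_chain i ys" and nz: "\<And>c. \<exists>j\<ge>c. i j \<noteq> 0"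
  shows "\<not> FORB (s j) (ys j)"
proof -
  have "\<forall>j. \<not> FL (s j) (ys j) L" for L
  proof (induction L)
    case 0 then show ?case using FL_0 by blast
  next
    case (Suc L)
    show ?case
    proof (intro allI notI)
      fix j assume fl: "FL (s j) (ys j) (Suc L)"
      obtain j' where j': "j' \<ge> Suc j" "i j' \<noteq> 0" using nz by blast
      obtain d where d: "j' = Suc (j + d)" using j' by (metis add_Suc less_eq_Suc_le le_Suc_ex Suc_le_eq)
      have "FL (s (j+d)) (ys (j+d)) (Suc L)" using FL_later[OF r ch fl] by blast
      then have "FL (s (Suc (j+d))) (ys (Suc (j+d))) L" using FL_step[OF r ch] j' d by fastforce
      then show False using Suc.IH by blast
    qed
  qed
  then show ?thesis using FORB_FL by blast
qed

lemma noFB_ez: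
  assumes r: "run_from_A i s" and ch: "code_chain i ys"
    and t: "\<And>j. j \<ge> m \<Longrightarrow> \<not> FORB (s j) (ys j)"
  shows "\<not> FORB (s j) (ys j)"
proof
  assume "FORB (s j) (ys j)"
  then have "FL (s j) (ys j) 3" by (rule FORB_FL)
  then have "FL (s (j+m)) (ys (j+m)) 3" using FL_later[OF r ch] by blast
  then have "FORB (s (j+m)) (ys (j+m))" by (auto simp: FL_def FORB_def)
  then show False using t[of "j+m"] by simp
qed



definition flet :: "(nat \<Rightarrow> nat) \<Rightarrow> nat \<Rightarrow> bool" where
  "flet i j = hd (pref (i (LEAST k. j < k \<and> pref (i k) \<noteq> [])))"

function Yf :: "(nat \<Rightarrow> nat) \<Rightarrow> nat \<Rightarrow> nat \<Rightarrow> bool" where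
  "Yf i j n = (if n < length (pref (i (Suc j))) then pref (i (Suc j)) ! n
     else if n = 0 then flet i j
     else if even (n - length (pref (i (Suc j)))) then Yf i (Suc j) ((n - length (pref (i (Suc j)))) div 2)
     else \<not> Yf i (Suc j) ((n - length (pref (i (Suc j)))) div 2))"
  by pat_completeness auto
termination by (relation "measure (\<lambda>(i,j,n). n)") auto

declare Yf.simps[simp del]

lemma flet_ne: "pref (i (Suc j)) \<noteq> [] \<Longrightarrow> flet i j = hd (pref (i (Suc j)))"
proof -
  assume h: "pref (i (Suc j)) \<noteq> []"
  have "(LEAST k. j < k \<and> pref (i k) \<noteq> []) = Suc j"
    by (rule Least_equality) (use h in auto)
  then show ?thesis by (simp add: flet_def)
qed

lemma flet_e: "pref (i (Suc j)) = [] \<Longrightarrow> flet i j = flet i (Suc j)"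
proof -
  assume h: "pref (i (Suc j)) = []"
  have "(\<lambda>k. j < k \<and> pref (i k) \<noteq> []) = (\<lambda>k. Suc j < k \<and> pref (i k) \<noteq> [])"
  proof
    fix k show "(j < k \<and> pref (i k) \<noteq> []) = (Suc j < k \<and> pref (i k) \<noteq> [])"
      using h by (cases "k = Suc j") auto
  qed
  then show ?thesis by (simp add: flet_def)
qed

lemma Yf0: "Yf i j 0 = flet i j"
  by (subst Yf.simps) (auto simp: flet_ne hd_conv_nth)

lemma Yf_step: "Yf i j = conc (pref (i (Suc j))) (mu (Yf i (Suc j)))"
proof
  fix n
  show "Yf i j n = conc (pref (i (Suc j))) (mu (Yf i (Suc j))) n"
  proof (cases "n < length (pref (i (Suc j)))")
    case True then show ?thesis by (subst Yf.simps) (simp add: conc_def)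
  next
    case False
    show ?thesis
    proof (cases "n = 0")
      case True
      then have e: "pref (i (Suc j)) = []" using False by simp
      have "Yf i j n = flet i j" using True Yf0 by simp
      also have "\<dots> = Yf i (Suc j) 0" using flet_e[of i j, OF e] Yf0 by simp
      finally show ?thesis using True e by (simp add: conc_def mu_def)
    next
      case n0: False
      then show ?thesis using False by (subst Yf.simps) (simp add: conc_def mu_def)
    qed
  qed
qed

lemma Yf_chain: "code_chain i (Yf i)"
  by (rule chain_intro) (rule Yf_step)

lemma chain_unique:
  assumes ch: "code_chain i ys" and nz: "\<And>j. \<exists>k>j. pref (i k) \<noteq> []"
  shows "ys j n = Yf i j n"
proof -
  have first: "\<forall>j. (\<exists>k. j < k \<and> k \<le> j + d \<and> pref (i k) \<noteq> []) \<longrightarrow> ys j 0 = flet i j" for d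
  proof (induction d)
    case 0 then show ?case by auto
  next
    case (Suc d)
    show ?case
    proof (intro allI impI)
      fix j assume ex: "\<exists>k. j < k \<and> k \<le> j + Suc d \<and> pref (i k) \<noteq> []"
      have ys: "ys j = conc (pref (i (Suc j))) (mu (ys (Suc j)))" by (rule chain_step[OF ch])
      show "ys j 0 = flet i j"
      proof (cases "pref (i (Suc j)) = []")
        case False
        then show ?thesis using ys by (simp add: conc_def flet_ne hd_conv_nth)
      next
        case True
        then have "\<exists>k. Suc j < k \<and> k \<le> Suc j + d \<and> pref (i k) \<noteq> []"
          using ex by (metis Suc_lessI add_Suc le_SucE le_add1 add_Suc_right le_trans)
        then have "ys (Suc j) 0 = flet i (Suc j)" using Suc.IH by blast
        then show ?thesis using ys True flet_e[of i j, OF True] by (simp add: conc_def mu_def)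
      qed
    qed
  qed
  have y0: "ys j 0 = flet i j" for j
  proof -
    obtain k where k: "k > j" "pref (i k) \<noteq> []" using nz by blast
    have "\<exists>k'. j < k' \<and> k' \<le> j + (k - j) \<and> pref (i k') \<noteq> []" using k by auto
    then show ?thesis using first[of "k - j"] by blast
  qed
  have "\<forall>j. ys j n = Yf i j n"
  proof (induction n rule: less_induct)
    case (less n)
    show ?case
    proof
      fix j
      have ys: "ys j = conc (pref (i (Suc j))) (mu (ys (Suc j)))" by (rule chain_step[OF ch])
      show "ys j n = Yf i j n"
      proof (cases "n < length (pref (i (Suc j)))")
        case True then show ?thesis using ys by (subst Yf.simps) (simp add: conc_def)
      next
        case False
        show ?thesis
        proof (cases "n = 0")
          case True then show ?thesis using y0 Yf0 by simp
        next
          case n0: False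
          have lt: "(n - length (pref (i (Suc j)))) div 2 < n" using n0 by simp
          show ?thesis using False n0 ys less.IH[OF lt]
            by (subst Yf.simps) (simp add: conc_def mu_def)
        qed
      qed
    qed
  qed
  then show ?thesis by blast
qed



fun down :: "(nat \<Rightarrow> nat) \<Rightarrow> iword \<Rightarrow> nat \<Rightarrow> nat \<Rightarrow> iword" where
  "down i T j 0 = T"
| "down i T j (Suc d) = conc (pref (i (Suc j))) (mu (down i T (Suc j) d))"

definition chT :: "(nat \<Rightarrow> nat) \<Rightarrow> nat \<Rightarrow> iword \<Rightarrow> nat \<Rightarrow> iword" where
  "chT i m T j = (if j \<le> m then down i T j (m - j) else T)"

lemma chT_ge: "j \<ge> m \<Longrightarrow> chT i m T j = T"
  by (auto simp: chT_def)

lemma chT_chain: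
  assumes T: "mu T = T" and z: "\<And>j. j > m \<Longrightarrow> i j = 0"
  shows "code_chain i (chT i m T)"
proof (rule chain_intro)
  fix j
  show "chT i m T j = conc (pref (i (Suc j))) (mu (chT i m T (Suc j)))"
  proof (cases "j < m")
    case True
    then have "m - j = Suc (m - Suc j)" by simp
    then show ?thesis using True by (simp add: chT_def)
  next
    case False
    then show ?thesis using chT_ge[of m j] chT_ge[of m "Suc j"] z[of "Suc j"] T by simp
  qed
qed

lemma conc_mu_inj: "conc p (mu X) = conc p (mu Y) \<Longrightarrow> X = Y"
proof
  fix n assume h: "conc p (mu X) = conc p (mu Y)"
  have "conc p (mu X) (length p + 2*n) = conc p (mu Y) (length p + 2*n)" using h by simp
  then show "X n = Y n" by (simp add: conc_def)
qed

lemma down_inj: "down i T1 j d = down i T2 j d \<Longrightarrow> T1 = T2"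
  by (induction d arbitrary: j) (auto dest: conc_mu_inj)

lemma chain_down: "code_chain i ys \<Longrightarrow> j + d = m \<Longrightarrow> ys j = down i (ys m) j d"
proof (induction d arbitrary: j)
  case 0 then show ?case by simp
next
  case (Suc d)
  have "ys (Suc j) = down i (ys m) (Suc j) d" using Suc by simp
  then show ?case using chain_step[OF Suc.prems(1), of j] by simp
qed

lemma FORB_single: "forbs q = [[b]] \<Longrightarrow> FORB q z \<longleftrightarrow> z 0 = b"
  by (auto simp: FORB_def)

lemma FORB_empty: "forbs q = [] \<Longrightarrow> \<not> FORB q z"
  by (auto simp: FORB_def)

primrec sr :: "(nat \<Rightarrow> nat) \<Rightarrow> nat \<Rightarrow> state" where
  "sr i 0 = A"
| "sr i (Suc j) = (case delta (sr i j) (i (Suc j)) of Some q \<Rightarrow> q | None \<Rightarrow> A)"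

lemma dir1:
  assumes ch: "code_chain i ys" and lt: "\<And>j. j \<ge> 1 \<Longrightarrow> i j < 5" and g: "Good A (ys 0)"
  shows "run_from_A i (sr i)"
proof -
  have G: "Good (sr i j) (ys j)" for j
  proof (induction j)
    case 0 then show ?case using g by simp
  next
    case (Suc j)
    have gg: "Good (sr i j) (conc (pref (i (Suc j))) (mu (ys (Suc j))))" using Suc chain_step[OF ch, of j] by simp
    have "delta (sr i j) (i (Suc j)) \<noteq> None" using Nontrans[of "sr i j" "i (Suc j)"] lt[of "Suc j"] gg by auto
    then obtain q where q: "delta (sr i j) (i (Suc j)) = Some q" by blast
    then show ?case using Up[OF q gg] by simp
  qed
  have "delta (sr i j) (i (Suc j)) = Some (sr i (Suc j))" for j
  proof -
    have gg: "Good (sr i j) (conc (pref (i (Suc j))) (mu (ys (Suc j))))" using G[of j] chain_step[OF ch, of j] by simp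
    have "delta (sr i j) (i (Suc j)) \<noteq> None" using Nontrans[of "sr i j" "i (Suc j)"] lt[of "Suc j"] gg by auto
    then show ?thesis by auto
  qed
  then show ?thesis by (simp add: run_from_A_def)
qed

lemma pref_ne: "0 < n \<Longrightarrow> n < 5 \<Longrightarrow> pref n \<noteq> []"
proof -
  assume "0 < n" "n < 5"
  then have "n = Suc 0 \<or> n = Suc (Suc 0) \<or> n = Suc (Suc (Suc 0)) \<or> n = Suc (Suc (Suc (Suc 0)))" by arith
  then show ?thesis by auto
qed

lemma ez_part:
  assumes r: "run_from_A i s" and c: "c \<ge> 1" and z: "\<forall>j\<ge>c. i j = 0"
  shows "\<exists>x1 x2. x1 \<noteq> x2 \<and> {x. codes i x} = {x1, x2}
              \<and> codes_with_tail i x1 (c - 1) thue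
              \<and> codes_with_tail i x2 (c - 1) thue_bar
              \<and> (((\<forall>j\<ge>c - 1. s j = A) \<or> (\<forall>j\<ge>c - 1. s j \<in> {B, D}))
                    \<longrightarrow> x1 \<in> OF \<and> x2 \<in> OF)
              \<and> ((\<forall>j\<ge>c - 1. s j \<in> {J, K}) \<longrightarrow> x1 \<in> OF \<and> x2 \<notin> OF)
              \<and> ((\<forall>j\<ge>c - 1. s j \<in> {G, H}) \<longrightarrow> x1 \<notin> OF \<and> x2 \<in> OF)"
proof -
  define m where "m = c - 1"
  have zm: "\<And>j. j > m \<Longrightarrow> i j = 0" using z c by (simp add: m_def)
  define Y1 where "Y1 = chT i m thue"
  define Y2 where "Y2 = chT i m thue_bar"
  have ch1: "code_chain i Y1" unfolding Y1_def by (rule chT_chain[OF thue_fix zm])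
  have ch2: "code_chain i Y2" unfolding Y2_def by (rule chT_chain[OF thue_bar_fix zm])
  have Y1m: "\<And>j. j \<ge> m \<Longrightarrow> Y1 j = thue" by (simp add: Y1_def chT_ge)
  have Y2m: "\<And>j. j \<ge> m \<Longrightarrow> Y2 j = thue_bar" by (simp add: Y2_def chT_ge)
  have rng: "\<forall>j\<ge>1. i j \<in> {0..4}" by (rule run_range[OF r])
  have cod1: "codes i (Y1 0)" using ch1 rng by (auto simp: codes_def)
  have cod2: "codes i (Y2 0)" using ch2 rng by (auto simp: codes_def)
  have neq: "Y1 0 \<noteq> Y2 0"
  proof
    assume "Y1 0 = Y2 0"
    then have "down i thue 0 m = down i thue_bar 0 m" by (simp add: Y1_def Y2_def chT_def)
    then show False using down_inj thue_neq by blast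
  qed
  have set: "{x. codes i x} = {Y1 0, Y2 0}"
  proof
    show "{Y1 0, Y2 0} \<subseteq> {x. codes i x}" using cod1 cod2 by auto
  next
    show "{x. codes i x} \<subseteq> {Y1 0, Y2 0}"
    proof
      fix x assume "x \<in> {x. codes i x}"
      then obtain ys where ys: "ys 0 = x" "code_chain i ys" by (auto simp: codes_def)
      have "\<And>j. j \<ge> m \<Longrightarrow> ys j = mu (ys (Suc j))"
        using chain_step[OF ys(2)] zm by (metis conc_nil le_imp_less_Suc pref.simps(1))
      then have t: "ys m = thue \<or> ys m = thue_bar" by (rule tail_char)
      have "ys 0 = down i (ys m) 0 m" using chain_down[OF ys(2), of 0 m] by simp
      then have "x = chT i m (ys m) 0" using ys(1) by (simp add: chT_def)
      then show "x \<in> {Y1 0, Y2 0}" using t by (auto simp: Y1_def Y2_def)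
    qed
  qed
  have tl1: "codes_with_tail i (Y1 0) (c - 1) thue"
    unfolding codes_with_tail_def using ch1 Y1m[of m] by (auto simp: m_def)
  have tl2: "codes_with_tail i (Y2 0) (c - 1) thue_bar"
    unfolding codes_with_tail_def using ch2 Y2m[of m] by (auto simp: m_def)
  have pos: "Y 0 \<in> OF" if chY: "code_chain i Y" and Ym: "\<And>j. j \<ge> m \<Longrightarrow> \<not> FORB (s j) (Y j)" for Y
    using noOV[OF r chY] noFB_ez[OF r chY Ym] by blast
  have neg: "Y 0 \<notin> OF" if chY: "code_chain i Y" and Ym: "FORB (s m) (Y m)" for Y
  proof
    assume "Y 0 \<in> OF"
    then have "Good (s m) (Y m)" using Good_run[OF r chY] Good_A by blast
    then show False using Ym by (simp add: Good_def)
  qed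
  have p1: "x1 \<in> OF \<and> x2 \<in> OF" if "(\<forall>j\<ge>c - 1. s j = A) \<or> (\<forall>j\<ge>c - 1. s j \<in> {B, D})"
    and "x1 = Y1 0" "x2 = Y2 0" for x1 x2
  proof -
    have e: "\<And>j. j \<ge> m \<Longrightarrow> forbs (s j) = []" using that(1) by (auto simp: m_def)
    show ?thesis using pos[OF ch1] pos[OF ch2] e FORB_empty that(2,3) by blast
  qed
  have p2: "Y1 0 \<in> OF \<and> Y2 0 \<notin> OF" if "\<forall>j\<ge>c - 1. s j \<in> {J, K}"
  proof -
    have e: "\<And>j. j \<ge> m \<Longrightarrow> forbs (s j) = [[True]]" using that by (auto simp: m_def)
    have "Y1 0 \<in> OF" using pos[OF ch1] e FORB_single Y1m thue0 by auto
    moreover have "Y2 0 \<notin> OF" using neg[OF ch2] e[of m] FORB_single Y2m[of m] thue_bar0 by auto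
    ultimately show ?thesis by blast
  qed
  have p3: "Y1 0 \<notin> OF \<and> Y2 0 \<in> OF" if "\<forall>j\<ge>c - 1. s j \<in> {G, H}"
  proof -
    have e: "\<And>j. j \<ge> m \<Longrightarrow> forbs (s j) = [[False]]" using that by (auto simp: m_def)
    have "Y2 0 \<in> OF" using pos[OF ch2] e FORB_single Y2m thue_bar0 by auto
    moreover have "Y1 0 \<notin> OF" using neg[OF ch1] e[of m] FORB_single Y1m[of m] thue0 by auto
    ultimately show ?thesis by blast
  qed
  show ?thesis
    apply (rule exI[of _ "Y1 0"], rule exI[of _ "Y2 0"])
    using neq set tl1 tl2 p1 p2 p3 by blast
qed

lemma nz_part:
  assumes r: "run_from_A i s" and nz: "\<not> (\<exists>c\<ge>1. \<forall>j\<ge>c. i j = 0)"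
  shows "(\<exists>!x. codes i x) \<and> (\<forall>x. codes i x \<longrightarrow> x \<in> OF)"
proof -
  have nz1: "\<And>c. \<exists>j\<ge>c. i j \<noteq> 0"
  proof -
    fix c
    have "\<exists>j\<ge>Suc c. i j \<noteq> 0" using nz by auto
    then obtain j where "j \<ge> Suc c" "i j \<noteq> 0" by blast
    then show "\<exists>j\<ge>c. i j \<noteq> 0" by (intro exI[of _ j]) simp
  qed
  have nz2: "\<And>j. \<exists>k>j. pref (i k) \<noteq> []"
  proof -
    fix j
    obtain k where k: "k \<ge> Suc j" "i k \<noteq> 0" using nz1 by blast
    then have "i k < 5" using run_lt5[OF r, of k] by simp
    then have "pref (i k) \<noteq> []" using k pref_ne[of "i k"] by simp
    then show "\<exists>k>j. pref (i k) \<noteq> []" using k by (intro exI[of _ k]) simp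
  qed
  have rng: "\<forall>j\<ge>1. i j \<in> {0..4}" by (rule run_range[OF r])
  have ex: "codes i (Yf i 0)" using Yf_chain rng by (auto simp: codes_def)
  have un: "x = Yf i 0" if cx: "codes i x" for x
  proof -
    obtain ys where ys: "ys 0 = x" "code_chain i ys" using cx by (auto simp: codes_def)
    show ?thesis using chain_unique[OF ys(2) nz2, of 0] ys(1) by auto
  qed
  have of: "x \<in> OF" if cx: "codes i x" for x
  proof -
    obtain ys where ys: "ys 0 = x" "code_chain i ys" using cx by (auto simp: codes_def)
    show ?thesis using noOV[OF r ys(2)] noFB_nz[OF r ys(2) nz1] ys(1) by blast
  qed
  show ?thesis using ex un of by blast
qed

theorem theorem3:
  shows "(\<forall>x i. x \<in> OF \<and> is_code_of x i \<longrightarrow> path_label_from_A i)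
   \<and> (\<forall>i s. run_from_A i s \<longrightarrow>
        ((\<not> (\<exists>c\<ge>1. \<forall>j\<ge>c. i j = 0)) \<longrightarrow>
            (\<exists>!x. codes i x) \<and> (\<forall>x. codes i x \<longrightarrow> x \<in> OF))
      \<and> (\<forall>c\<ge>1. (\<forall>j\<ge>c. i j = 0) \<longrightarrow>
           (\<exists>x1 x2. x1 \<noteq> x2 \<and> {x. codes i x} = {x1, x2}
              \<and> codes_with_tail i x1 (c - 1) thue
              \<and> codes_with_tail i x2 (c - 1) thue_bar
              \<and> (((\<forall>j\<ge>c - 1. s j = A) \<or> (\<forall>j\<ge>c - 1. s j \<in> {B, D}))
                    \<longrightarrow> x1 \<in> OF \<and> x2 \<in> OF)
              \<and> ((\<forall>j\<ge>c - 1. s j \<in> {J, K}) \<longrightarrow> x1 \<in> OF \<and> x2 \<notin> OF)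
              \<and> ((\<forall>j\<ge>c - 1. s j \<in> {G, H}) \<longrightarrow> x1 \<notin> OF \<and> x2 \<in> OF))))"
proof (intro conjI allI impI)
  fix x i assume h: "x \<in> OF \<and> is_code_of x i"
  then obtain ys where ys: "ys 0 = x" "code_chain i ys" and rng: "\<forall>j\<ge>1. i j \<in> {0..4}"
    by (auto simp: is_code_of_def)
  have lt: "\<And>j. j \<ge> 1 \<Longrightarrow> i j < 5" using rng by fastforce
  have "Good A (ys 0)" using h ys(1) Good_A by simp
  then show "path_label_from_A i" using dir1[OF ys(2) lt] by (auto simp: path_label_from_A_def)
next
  fix i s assume "run_from_A i s" "\<not> (\<exists>c\<ge>1. \<forall>j\<ge>c. i j = 0)"
  then show "\<exists>!x. codes i x" using nz_part by blast
next
  fix i s x assume "run_from_A i s" "\<not> (\<exists>c\<ge>1. \<forall>j\<ge>c. i j = 0)" "codes i x"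
  then show "x \<in> OF" using nz_part by blast
next
  fix i s c assume "run_from_A i s" "1 \<le> c" "\<forall>j\<ge>c. i j = 0"
  then show "\<exists>x1 x2. x1 \<noteq> x2 \<and> {x. codes i x} = {x1, x2}
              \<and> codes_with_tail i x1 (c - 1) thue
              \<and> codes_with_tail i x2 (c - 1) thue_bar
              \<and> (((\<forall>j\<ge>c - 1. s j = A) \<or> (\<forall>j\<ge>c - 1. s j \<in> {B, D}))
                    \<longrightarrow> x1 \<in> OF \<and> x2 \<in> OF)
              \<and> ((\<forall>j\<ge>c - 1. s j \<in> {J, K}) \<longrightarrow> x1 \<in> OF \<and> x2 \<notin> OF)
              \<and> ((\<forall>j\<ge>c - 1. s j \<in> {G, H}) \<longrightarrow> x1 \<notin> OF \<and> x2 \<in> OF)"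
    by (rule ez_part)
qed


end
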